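(* Let $X_1,\ldots,X_n$ be nonnegative random variables with no ties. For every $A\subseteq[n]$ and $k\in[n]$, $$\Pr\Big(X_{k:n}=\min_{i\in A}X_i\Big)=\sum_{B\supseteq A,\ |B|=n-k+1}q(B)-\sum_{B\supseteq A,\ |B|=n-k}q(B),$$ and for any semicoherent structure function $\phi$ on $[n]$ with system lifetime $T$, and every $k\in\{0,\ldots,n\}$ (with $X_{0:n}:=0$... more precisely for $k\in[n]$), $$\Pr(T>X_{k:n})=\sum_{|A|=n-k}q(A)\,\phi(A)=\sum_{A\subseteq[n]}m_\phi(A)\,\Pr\Big(X_{k:n}<\min_{i\in A}X_i\Big).$$
   Context: No ties: $\Pr(X_i=X_k)=0$ for $i\neq k$. $X_{k:n}$ is the $k$th smallest of $X_1,\ldots,X_n$. For $A\subseteq[n]$, $q(A)=\Pr\big(\max_{i\notin A}X_i<\min_{i\in A}X_i\big)$ (empty max $=-\infty$, empty min $=+\infty$), the probability that the $|A|$ longest-lived components are exactly those in $A$. A semicoherent structure function $\phi:2^{[n]}\to\{0,1\}$ (subsets identified with Boolean vectors) is nondecreasing with $\phi(\varnothing)=0$, $\phi([n])=1$; the system lifetime is $T=\inf\{t\geq0:\phi(\{i:X_i>t\})=0\}$. Möbius transform: $m_\phi(A)=\sum_{B\subseteq A}(-1)^{|A|-|B|}\phi(B)$. *)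

theory Defs
  imports "HOL-Probability.Probability"
begin

definition ord_stat :: "nat \<Rightarrow> (nat \<Rightarrow> 'a \<Rightarrow> real) \<Rightarrow> nat \<Rightarrow> 'a \<Rightarrow> real" where
  "ord_stat n X k w = sort (map (\<lambda>i. X i w) [1..<Suc n]) ! (k - 1)"

text \<open>min over A of X i w, with the empty minimum equal to +infinity.\<close>
definition min_on :: "(nat \<Rightarrow> 'a \<Rightarrow> real) \<Rightarrow> nat set \<Rightarrow> 'a \<Rightarrow> ereal" where
  "min_on X A w = Inf ((\<lambda>i. ereal (X i w)) ` A)"

text \<open>max over A of X i w, with the empty maximum equal to -infinity.\<close>
definition max_on :: "(nat \<Rightarrow> 'a \<Rightarrow> real) \<Rightarrow> nat set \<Rightarrow> 'a \<Rightarrow> ereal" where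
  "max_on X A w = Sup ((\<lambda>i. ereal (X i w)) ` A)"

definition qprob :: "'a measure \<Rightarrow> nat \<Rightarrow> (nat \<Rightarrow> 'a \<Rightarrow> real) \<Rightarrow> nat set \<Rightarrow> real" where
  "qprob M n X A = measure M {w \<in> space M. max_on X ({1..n} - A) w < min_on X A w}"

definition semicoherent :: "nat \<Rightarrow> (nat set \<Rightarrow> bool) \<Rightarrow> bool" where
  "semicoherent n \<phi> \<longleftrightarrow>
     (\<forall>A B. A \<subseteq> B \<and> B \<subseteq> {1..n} \<longrightarrow> (\<phi> A \<longrightarrow> \<phi> B)) \<and> \<not> \<phi> {} \<and> \<phi> {1..n}"

definition sys_lifetime :: "nat \<Rightarrow> (nat set \<Rightarrow> bool) \<Rightarrow> (nat \<Rightarrow> 'a \<Rightarrow> real) \<Rightarrow> 'a \<Rightarrow> real" where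
  "sys_lifetime n \<phi> X w = Inf {t. t \<ge> 0 \<and> \<not> \<phi> {i \<in> {1..n}. X i w > t}}"

definition mobius :: "(nat set \<Rightarrow> bool) \<Rightarrow> nat set \<Rightarrow> real" where
  "mobius \<phi> A = (\<Sum>B\<in>Pow A. (-1::real) ^ (card A - card B) * of_bool (\<phi> B))"

end

theory Submission
  imports Defs
begin

lemma sorted_nth_pred:
  assumes "sorted xs" "j < length xs" "\<And>x y. P y \<Longrightarrow> x \<le> y \<Longrightarrow> P x"
  shows "P (xs!j) \<longleftrightarrow> j < length (filter P xs)"
proof
  assume h: "P (xs!j)"
  have "{0..j} \<subseteq> {i. i < length xs \<and> P (xs!i)}"
    using assms h by (auto intro: assms(3) simp: sorted_iff_nth_mono)
  then have "card {0..j} \<le> card {i. i < length xs \<and> P (xs!i)}"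
    by (intro card_mono) auto
  then show "j < length (filter P xs)" by (simp add: length_filter_conv_card)
next
  assume h: "j < length (filter P xs)"
  show "P (xs!j)"
  proof (rule ccontr)
    assume n: "\<not> P (xs!j)"
    have "{i. i < length xs \<and> P (xs!i)} \<subseteq> {0..<j}"
    proof
      fix i assume i: "i \<in> {i. i < length xs \<and> P (xs!i)}"
      show "i \<in> {0..<j}"
      proof (rule ccontr)
        assume "i \<notin> {0..<j}"
        then have "xs!j \<le> xs!i" using i assms by (auto simp: sorted_iff_nth_mono)
        then show False using i n assms(3) by auto
      qed
    qed
    then have "card {i. i < length xs \<and> P (xs!i)} \<le> j"
      by (metis card_atLeastLessThan card_mono finite_atLeastLessThan minus_nat.diff_0)
    then show False using h by (simp add: length_filter_conv_card)
  qed
qed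

lemma len_filter_sort: "length (filter P (sort xs)) = length (filter P xs)"
  by (metis mset_filter mset_sort size_mset)

lemma len_filter_map_upt: "length (filter P (map f [1..<Suc n])) = card {i\<in>{1..n}. P (f i)}"
proof -
  have "length (filter P (map f [1..<Suc n])) = length (filter (P \<circ> f) [1..<Suc n])"
    by (simp add: filter_map del: upt_Suc)
  also have "\<dots> = card (set (filter (P \<circ> f) [1..<Suc n]))"
    by (metis distinct_card distinct_filter distinct_upt)
  also have "set (filter (P \<circ> f) [1..<Suc n]) = {i\<in>{1..n}. P (f i)}" by (auto simp del: upt_Suc)
  finally show ?thesis .
qed

lemma os_char:
  assumes "k \<in> {1..n}" "\<And>x y. P y \<Longrightarrow> x \<le> y \<Longrightarrow> P x"
  shows "P (ord_stat n X k w) \<longleftrightarrow> k \<le> card {i\<in>{1..n}. P (X i w)}"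
proof -
  let ?xs = "sort (map (\<lambda>i. X i w) [1..<Suc n])"
  have "P (?xs ! (k-1)) \<longleftrightarrow> k - 1 < length (filter P ?xs)"
    using assms by (intro sorted_nth_pred) (auto simp del: upt_Suc)
  moreover have "length (filter P ?xs) = card {i\<in>{1..n}. P (X i w)}"
    unfolding len_filter_sort len_filter_map_upt ..
  ultimately show ?thesis using assms(1)
    by (auto simp: ord_stat_def simp del: upt_Suc)
qed

lemma os_mem:
  assumes "k \<in> {1..n}" shows "\<exists>i\<in>{1..n}. ord_stat n X k w = X i w"
proof -
  let ?xs = "sort (map (\<lambda>i. X i w) [1..<Suc n])"
  have "?xs ! (k-1) \<in> set ?xs" using assms by (intro nth_mem) (auto simp del: upt_Suc)
  then show ?thesis by (auto simp: ord_stat_def simp del: upt_Suc)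
qed

definition upset :: "nat \<Rightarrow> (nat \<Rightarrow> 'a \<Rightarrow> real) \<Rightarrow> nat set \<Rightarrow> 'a \<Rightarrow> bool" where
  "upset n X B w \<longleftrightarrow> (\<forall>i\<in>B. \<forall>j\<in>{1..n}-B. X j w < X i w)"

lemma os_cards:
  assumes k: "k \<in> {1..n}" and inj: "inj_on (\<lambda>i. X i w) {1..n}"
  shows "card {i\<in>{1..n}. ord_stat n X k w < X i w} = n - k"
    and "card {i\<in>{1..n}. ord_stat n X k w \<le> X i w} = n - k + 1"
proof -
  define v where "v = ord_stat n X k w"
  define L where "L = {i\<in>{1..n}. X i w < v}"
  define E where "E = {i\<in>{1..n}. X i w \<le> v}"
  have m1: "\<And>x y. y < v \<Longrightarrow> x \<le> y \<Longrightarrow> x < v" by simp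
  have m2: "\<And>x y. y \<le> v \<Longrightarrow> x \<le> y \<Longrightarrow> x \<le> v" by simp
  have cl: "\<not> k \<le> card L"
    using os_char[where P="\<lambda>x. x < v" and X=X and w=w, OF k m1] unfolding L_def by (simp add: v_def)
  have ce: "k \<le> card E"
    using os_char[where P="\<lambda>x. x \<le> v" and X=X and w=w, OF k m2] unfolding E_def by (simp add: v_def)
  obtain i0 where i0: "i0 \<in> {1..n}" "v = X i0 w" using os_mem[OF k, of X w] unfolding v_def by blast
  have "E = insert i0 L"
  proof (intro equalityI subsetI)
    fix i assume i: "i \<in> E"
    show "i \<in> insert i0 L"
    proof (cases "X i w < v")
      case True then show ?thesis using i unfolding L_def E_def by simp
    next
      case False
      then have "X i w = X i0 w" using i i0(2) unfolding E_def by simp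
      then have "i = i0" using inj i i0(1) unfolding inj_on_def E_def by blast
      then show ?thesis by simp
    qed
  next
    fix i assume "i \<in> insert i0 L" then show "i \<in> E" using i0 unfolding L_def E_def by auto
  qed
  moreover have "i0 \<notin> L" using i0 unfolding L_def by simp
  moreover have "finite L" unfolding L_def by simp
  ultimately have "card E = card L + 1" by simp
  with cl ce have cL: "card L = k - 1" and cE: "card E = k" by linarith+
  have fE: "finite E" "E \<subseteq> {1..n}" unfolding E_def by auto
  have fL: "finite L" "L \<subseteq> {1..n}" unfolding L_def by auto
  have "{i\<in>{1..n}. ord_stat n X k w < X i w} = {1..n} - E" unfolding E_def v_def by auto
  then show "card {i\<in>{1..n}. ord_stat n X k w < X i w} = n - k"
    using cE card_Diff_subset[OF fE(1,2)] by simp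
  have "{i\<in>{1..n}. ord_stat n X k w \<le> X i w} = {1..n} - L" unfolding L_def v_def by auto
  then show "card {i\<in>{1..n}. ord_stat n X k w \<le> X i w} = n - k + 1"
    using cL k card_Diff_subset[OF fL(1,2)] by (simp add: Suc_diff_le)
qed

lemma upset_unique:
  assumes "upset n X B w" "upset n X B' w" "B \<subseteq> {1..n}" "B' \<subseteq> {1..n}" "card B = card B'"
  shows "B = B'"
proof -
  have "B \<subseteq> B' \<or> B' \<subseteq> B"
  proof (rule ccontr)
    assume "\<not> (B \<subseteq> B' \<or> B' \<subseteq> B)"
    then obtain i j where "i \<in> B" "i \<notin> B'" "j \<in> B'" "j \<notin> B" by blast
    then show False
      using assms(1-4) \<open>i \<in> B\<close> \<open>i \<notin> B'\<close> \<open>j \<in> B'\<close> \<open>j \<notin> B\<close>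
      unfolding upset_def by (metis Diff_iff not_less_iff_gr_or_eq subsetD)
  qed
  moreover have "finite B" "finite B'" using assms(3,4) finite_subset by auto
  ultimately show ?thesis using assms(5) by (metis card_subset_eq)
qed

lemma upset_thr:
  "upset n X {i\<in>{1..n}. v < X i w} w" "upset n X {i\<in>{1..n}. v \<le> X i w} w"
  unfolding upset_def by auto

lemma Min_ereal_img:
  assumes "finite A" "A \<noteq> {}"
  shows "Min ((\<lambda>i. ereal (f i)) ` A) = ereal (Min (f ` A))"
proof -
  have "ereal (Min (f ` A)) = Min (ereal ` f ` A)"
    using assms by (intro mono_Min_commute) (auto intro: monoI)
  then show ?thesis by (simp add: image_image)
qed

lemma Max_ereal_img:
  assumes "finite A" "A \<noteq> {}"
  shows "Max ((\<lambda>i. ereal (f i)) ` A) = ereal (Max (f ` A))"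
proof -
  have "ereal (Max (f ` A)) = Max (ereal ` f ` A)"
    using assms by (intro mono_Max_commute) (auto intro: monoI)
  then show ?thesis by (simp add: image_image)
qed

lemma min_on_ne: "finite A \<Longrightarrow> A \<noteq> {} \<Longrightarrow> min_on X A w = ereal (Min ((\<lambda>i. X i w) ` A))"
  by (simp add: min_on_def Min_Inf[symmetric] Min_ereal_img)

lemma max_on_ne: "finite A \<Longrightarrow> A \<noteq> {} \<Longrightarrow> max_on X A w = ereal (Max ((\<lambda>i. X i w) ` A))"
  by (simp add: max_on_def Max_Sup[symmetric] Max_ereal_img)

lemma min_on_empty: "min_on X {} w = \<infinity>" by (simp add: min_on_def top_ereal_def)
lemma max_on_empty: "max_on X {} w = -\<infinity>" by (simp add: max_on_def bot_ereal_def)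

lemma maxmin_upset:
  assumes "finite B" "finite C"
  shows "max_on X C w < min_on X B w \<longleftrightarrow> (\<forall>i\<in>B. \<forall>j\<in>C. X j w < X i w)"
  using assms
  by (cases "B = {}"; cases "C = {}")
     (auto simp: min_on_ne max_on_ne min_on_empty max_on_empty Max_less_iff Min_gr_iff)

lemma eq_min_on:
  assumes "finite A"
  shows "ereal v = min_on X A w \<longleftrightarrow> (A \<noteq> {} \<and> (\<forall>i\<in>A. v \<le> X i w) \<and> (\<exists>i\<in>A. X i w = v))"
proof (cases "A = {}")
  case True then show ?thesis by (simp add: min_on_empty)
next
  case False
  have "v = Min ((\<lambda>i. X i w) ` A) \<longleftrightarrow> (v \<in> (\<lambda>i. X i w) ` A \<and> (\<forall>x\<in>(\<lambda>i. X i w) ` A. v \<le> x))"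
    using assms False by (auto intro!: Min_eqI[symmetric] Min_in)
  then show ?thesis using assms False by (auto simp: min_on_ne)
qed

lemma less_min_on:
  assumes "finite A"
  shows "ereal v < min_on X A w \<longleftrightarrow> (\<forall>i\<in>A. v < X i w)"
  using assms by (cases "A = {}") (auto simp: min_on_ne min_on_empty Min_gr_iff)

lemma sys_char:
  assumes semi: "semicoherent n \<phi>" and nn: "\<forall>i\<in>{1..n}. 0 \<le> X i w" and v: "0 \<le> v"
  shows "v < sys_lifetime n \<phi> X w \<longleftrightarrow> \<phi> {i\<in>{1..n}. v < X i w}"
proof -
  define S where "S = {t. t \<ge> 0 \<and> \<not> \<phi> {i \<in> {1..n}. X i w > t}}"
  have mono: "\<And>A B. A \<subseteq> B \<Longrightarrow> B \<subseteq> {1..n} \<Longrightarrow> \<phi> A \<Longrightarrow> \<phi> B"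
    using semi unfolding semicoherent_def by blast
  have e: "\<not> \<phi> {}" using semi unfolding semicoherent_def by blast
  define t0 where "t0 = Max (insert 0 ((\<lambda>i. X i w) ` {1..n}))"
  have h0: "{i \<in> {1..n}. X i w > t0} = {}"
    unfolding t0_def by (auto simp: not_less)
  have "t0 \<ge> 0" unfolding t0_def by simp
  moreover have "\<not> \<phi> {i \<in> {1..n}. X i w > t0}" by (subst h0) (rule e)
  ultimately have t0S: "t0 \<in> S" unfolding S_def by blast
  have bdd: "bdd_below S" unfolding S_def by (auto intro: bdd_belowI[of _ 0])
  have T: "sys_lifetime n \<phi> X w = Inf S" unfolding sys_lifetime_def S_def ..
  show ?thesis
  proof
    assume "v < sys_lifetime n \<phi> X w"
    show "\<phi> {i\<in>{1..n}. v < X i w}"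
    proof (rule ccontr)
      assume "\<not> \<phi> {i\<in>{1..n}. v < X i w}"
      then have "v \<in> S" unfolding S_def using v by simp
      then have "Inf S \<le> v" using bdd by (rule cInf_lower)
      then show False using \<open>v < sys_lifetime n \<phi> X w\<close> T by simp
    qed
  next
    assume ph: "\<phi> {i\<in>{1..n}. v < X i w}"
    define U where "U = {i\<in>{1..n}. v < X i w}"
    have "U \<noteq> {}" using ph e unfolding U_def by metis
    moreover have fU: "finite U" unfolding U_def by simp
    define m where "m = Min ((\<lambda>i. X i w) ` U)"
    have "m \<in> (\<lambda>i. X i w) ` U" unfolding m_def using \<open>U \<noteq> {}\<close> fU by (intro Min_in) auto
    then have vm: "v < m" unfolding U_def by auto
    have mle: "\<And>i. i \<in> U \<Longrightarrow> m \<le> X i w" unfolding m_def using fU by auto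
    have "m \<le> Inf S"
    proof (rule cInf_greatest)
      show "S \<noteq> {}" using t0S by blast
    next
      fix t assume tS: "t \<in> S"
      show "m \<le> t"
      proof (rule ccontr)
        assume "\<not> m \<le> t"
        have "U \<subseteq> {i \<in> {1..n}. X i w > t}"
        proof (rule subsetI)
          fix i assume "i \<in> U"
          then show "i \<in> {i \<in> {1..n}. X i w > t}"
            using mle[of i] \<open>\<not> m \<le> t\<close> U_def by auto
        qed
        then have "\<phi> {i \<in> {1..n}. X i w > t}" using mono[OF _ _ ph[folded U_def]] by blast
        then show False using tS unfolding S_def by simp
      qed
    qed
    then show "v < sys_lifetime n \<phi> X w" using vm T by simp
  qed
qed

lemma mobius_inv:
  assumes "finite S"
  shows "(\<Sum>A\<in>Pow S. mobius \<phi> A) = (of_bool (\<phi> S) :: real)"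
proof -
  define g where "g A = (-1::real) ^ card A * mobius \<phi> A" for A
  have g: "g A = (\<Sum>B\<in>Pow A. (-1) ^ card B * of_bool (\<phi> B))" if "finite A" for A
  proof -
    have "g A = (\<Sum>B\<in>Pow A. (-1::real) ^ card A * ((-1) ^ (card A - card B) * of_bool (\<phi> B)))"
      unfolding g_def mobius_def by (simp add: sum_distrib_left)
    also have "\<dots> = (\<Sum>B\<in>Pow A. (-1) ^ card B * of_bool (\<phi> B))"
    proof (rule sum.cong[OF refl])
      fix B assume "B \<in> Pow A"
      then have "card B \<le> card A" using that by (simp add: card_mono)
      then have "(-1::real) ^ card A * (-1) ^ (card A - card B) = (-1) ^ card B"
      proof -
        have "card A + (card A - card B) = card B + 2 * (card A - card B)"
          using \<open>card B \<le> card A\<close> by simp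
        then have "(-1::real) ^ card A * (-1) ^ (card A - card B) = (-1) ^ (card B + 2 * (card A - card B))"
          by (metis power_add)
        also have "\<dots> = (-1) ^ card B" by (simp add: power_add power_mult)
        finally show ?thesis .
      qed
      then show "(-1::real) ^ card A * ((-1) ^ (card A - card B) * of_bool (\<phi> B)) = (-1) ^ card B * of_bool (\<phi> B)"
        by (metis mult.assoc)
    qed
    finally show ?thesis .
  qed
  have "(of_bool (\<phi> S) :: real) = (\<Sum>T\<in>Pow S. (-1) ^ card T * g T)"
    by (rule inclusion_exclusion_symmetric[OF g assms])
  also have "\<dots> = (\<Sum>A\<in>Pow S. mobius \<phi> A)"
    unfolding g_def by (simp add: mult.assoc[symmetric] flip: power_add)
  finally show ?thesis by simp
qed

lemma sum_upset1:
  assumes "T \<subseteq> {1..n}" "upset n X T w" "card T = m"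
  shows "(\<Sum>B | A \<subseteq> B \<and> B \<subseteq> {1..n} \<and> card B = m. (of_bool (upset n X B w) :: real)) = of_bool (A \<subseteq> T)"
proof -
  have u: "\<And>B. B \<subseteq> {1..n} \<Longrightarrow> card B = m \<Longrightarrow> upset n X B w \<longleftrightarrow> B = T"
  proof -
    fix B assume B: "B \<subseteq> {1..n}" "card B = m"
    show "upset n X B w \<longleftrightarrow> B = T"
    proof
      assume "upset n X B w"
      then show "B = T" using upset_unique[OF _ assms(2) B(1) assms(1)] B(2) assms(3) by simp
    next
      assume "B = T" then show "upset n X B w" using assms(2) by simp
    qed
  qed
  have fin: "finite {B. A \<subseteq> B \<and> B \<subseteq> {1..n} \<and> card B = m}"
    by (rule finite_subset[of _ "Pow {1..n}"]) auto
  have "(\<Sum>B | A \<subseteq> B \<and> B \<subseteq> {1..n} \<and> card B = m. (of_bool (upset n X B w) :: real))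
      = (\<Sum>B | A \<subseteq> B \<and> B \<subseteq> {1..n} \<and> card B = m. if B = T then 1 else 0)"
    using u by (intro sum.cong) auto
  also have "\<dots> = of_bool (A \<subseteq> T)"
    using fin assms by (simp add: sum.delta)
  finally show ?thesis .
qed

lemma sum_upset2:
  assumes "T \<subseteq> {1..n}" "upset n X T w" "card T = m"
  shows "(\<Sum>B | B \<subseteq> {1..n} \<and> card B = m. (of_bool (upset n X B w) :: real) * of_bool (\<phi> B)) = of_bool (\<phi> T)"
proof -
  have u: "\<And>B. B \<subseteq> {1..n} \<Longrightarrow> card B = m \<Longrightarrow> upset n X B w \<longleftrightarrow> B = T"
  proof -
    fix B assume B: "B \<subseteq> {1..n}" "card B = m"
    show "upset n X B w \<longleftrightarrow> B = T"
    proof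
      assume "upset n X B w"
      then show "B = T" using upset_unique[OF _ assms(2) B(1) assms(1)] B(2) assms(3) by simp
    next
      assume "B = T" then show "upset n X B w" using assms(2) by simp
    qed
  qed
  have fin: "finite {B. B \<subseteq> {1..n} \<and> card B = m}"
    by (rule finite_subset[of _ "Pow {1..n}"]) auto
  have "(\<Sum>B | B \<subseteq> {1..n} \<and> card B = m. (of_bool (upset n X B w) :: real) * of_bool (\<phi> B))
      = (\<Sum>B | B \<subseteq> {1..n} \<and> card B = m. if B = T then of_bool (\<phi> T) else 0)"
    using u by (intro sum.cong) auto
  also have "\<dots> = of_bool (\<phi> T)"
    using fin assms by (simp add: sum.delta)
  finally show ?thesis .
qed

lemma ind_eq_min:
  assumes "finite A"
  shows "(of_bool (ereal v = min_on X A w) :: real)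
     = of_bool (\<forall>i\<in>A. v \<le> X i w) - of_bool (\<forall>i\<in>A. v < X i w)"
proof -
  note e = eq_min_on[OF assms, of v X w]
  show ?thesis
  proof (cases "\<forall>i\<in>A. v \<le> X i w")
    case False
    have nl: "\<not> (\<forall>i\<in>A. v < X i w)"
    proof
      assume "\<forall>i\<in>A. v < X i w"
      then have "\<forall>i\<in>A. v \<le> X i w" by (simp add: less_imp_le)
      with False show False by blast
    qed
    have a1: "(ereal v = min_on X A w) = False" using e False by blast
    have a2: "(\<forall>i\<in>A. v \<le> X i w) = False" using False by blast
    have a3: "(\<forall>i\<in>A. v < X i w) = False" using nl by blast
    show ?thesis unfolding a1 a2 a3 by simp
  next
    case True
    show ?thesis
    proof (cases "\<forall>i\<in>A. v < X i w")
      case True2: True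
      then have "\<not> (\<exists>i\<in>A. X i w = v)" by fastforce
      then show ?thesis using True True2 e by simp
    next
      case False
      then obtain i where i: "i \<in> A" "\<not> v < X i w" by blast
      then have "X i w = v" using True by force
      then have "ereal v = min_on X A w" using e True i by blast
      then show ?thesis using False True by simp
    qed
  qed
qed

lemma meas_int: "measure M {w\<in>space M. P w} = (\<integral>w. (of_bool (P w) :: real) \<partial>M)"
proof -
  have e: "{w\<in>space M. P w} \<inter> space M = {w\<in>space M. P w}" by auto
  have "measure M {w\<in>space M. P w} = (\<integral>w. indicator {w\<in>space M. P w} w \<partial>M)"
    unfolding Bochner_Integration.integral_indicator e ..
  also have "\<dots> = (\<integral>w. (of_bool (P w) :: real) \<partial>M)"
    by (rule Bochner_Integration.integral_cong[OF refl]) (simp add: indicator_def)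
  finally show ?thesis .
qed

lemma pred_int:
  assumes "prob_space M" "Measurable.pred M P"
  shows "integrable M (\<lambda>w. (of_bool (P w) :: real))"
proof -
  interpret prob_space M by fact
  have "integrable M (indicator {w\<in>space M. P w} :: _ \<Rightarrow> real)"
    using assms(2) by (intro integrable_real_indicator) (auto simp: pred_def emeasure_eq_measure)
  moreover have "integrable M (\<lambda>w. (of_bool (P w) :: real)) \<longleftrightarrow> integrable M (indicator {w\<in>space M. P w} :: _ \<Rightarrow> real)"
    by (rule Bochner_Integration.integrable_cong[OF refl]) (simp add: indicator_def)
  ultimately show ?thesis by simp
qed

lemma pred_borel: "Measurable.pred M P \<Longrightarrow> (\<lambda>w. (of_bool (P w) :: real)) \<in> borel_measurable M"
  by measurable

lemma pred_less: "f \<in> borel_measurable M \<Longrightarrow> g \<in> borel_measurable M \<Longrightarrow> Measurable.pred M (\<lambda>w. (f w :: real) < g w)"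
  unfolding pred_def by (rule borel_measurable_less)
lemma pred_le: "f \<in> borel_measurable M \<Longrightarrow> g \<in> borel_measurable M \<Longrightarrow> Measurable.pred M (\<lambda>w. (f w :: real) \<le> g w)"
  unfolding pred_def by (rule borel_measurable_le)

lemma pall: "finite I \<Longrightarrow> (\<And>i. i \<in> I \<Longrightarrow> Measurable.pred M (P i)) \<Longrightarrow> Measurable.pred M (\<lambda>w. \<forall>i\<in>I. P i w)"
  by (rule pred_intros_finite(3)) auto
lemma pex: "finite I \<Longrightarrow> (\<And>i. i \<in> I \<Longrightarrow> Measurable.pred M (P i)) \<Longrightarrow> Measurable.pred M (\<lambda>w. \<exists>i\<in>I. P i w)"
  by (rule pred_intros_finite(4)) auto

lemma pred_constb: "Measurable.pred M (\<lambda>w. c)" by (simp add: pred_def)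

theorem mainTheorem6:
  fixes M :: "'a measure" and n :: nat and X :: "nat \<Rightarrow> 'a \<Rightarrow> real"
    and \<phi> :: "nat set \<Rightarrow> bool"
  assumes "prob_space M"
    and rv: "\<And>i. i \<in> {1..n} \<Longrightarrow> X i \<in> borel_measurable M"
    and nonneg: "\<And>i w. i \<in> {1..n} \<Longrightarrow> w \<in> space M \<Longrightarrow> X i w \<ge> 0"
    and no_ties: "\<And>i j. i \<in> {1..n} \<Longrightarrow> j \<in> {1..n} \<Longrightarrow> i \<noteq> j \<Longrightarrow>
                     measure M {w \<in> space M. X i w = X j w} = 0"
    and semi: "semicoherent n \<phi>"
  shows "(\<forall>A k. A \<subseteq> {1..n} \<longrightarrow> k \<in> {1..n} \<longrightarrow>
            measure M {w \<in> space M. ereal (ord_stat n X k w) = min_on X A w}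
            = (\<Sum>B | A \<subseteq> B \<and> B \<subseteq> {1..n} \<and> card B = n - k + 1. qprob M n X B)
              - (\<Sum>B | A \<subseteq> B \<and> B \<subseteq> {1..n} \<and> card B = n - k. qprob M n X B))
       \<and> (\<forall>k \<in> {1..n}.
            measure M {w \<in> space M. sys_lifetime n \<phi> X w > ord_stat n X k w}
              = (\<Sum>A | A \<subseteq> {1..n} \<and> card A = n - k. qprob M n X A * of_bool (\<phi> A))
          \<and> (\<Sum>A | A \<subseteq> {1..n} \<and> card A = n - k. qprob M n X A * of_bool (\<phi> A))
              = (\<Sum>A\<in>Pow {1..n}. mobius \<phi> A *
                   measure M {w \<in> space M. ereal (ord_stat n X k w) < min_on X A w}))"
proof -
  interpret P: prob_space M by fact
  have pM: "prob_space M" by fact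
  note rvX = rv
  have osm: "(\<lambda>w. ord_stat n X k w) \<in> borel_measurable M" if k: "k \<in> {1..n}" for k
    unfolding borel_measurable_iff_less
  proof
    fix a :: real
    have eq: "{w \<in> space M. ord_stat n X k w < a}
        = {w\<in>space M. \<exists>S\<in>{S. S \<subseteq> {1..n} \<and> card S = k}. \<forall>i\<in>S. X i w < a}"
    proof (intro Collect_cong conj_cong refl)
      fix w
      have m: "\<And>x y. y < a \<Longrightarrow> x \<le> y \<Longrightarrow> x < a" by simp
      have "ord_stat n X k w < a \<longleftrightarrow> k \<le> card {i\<in>{1..n}. X i w < a}"
        by (rule os_char[where P="\<lambda>x. x < a", OF k m])
      also have "\<dots> \<longleftrightarrow> (\<exists>S\<in>{S. S \<subseteq> {1..n} \<and> card S = k}. \<forall>i\<in>S. X i w < a)"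
      proof
        assume "k \<le> card {i\<in>{1..n}. X i w < a}"
        then obtain S where "S \<subseteq> {i\<in>{1..n}. X i w < a}" "card S = k"
          by (meson obtain_subset_with_card_n)
        then show "\<exists>S\<in>{S. S \<subseteq> {1..n} \<and> card S = k}. \<forall>i\<in>S. X i w < a" by blast
      next
        assume "\<exists>S\<in>{S. S \<subseteq> {1..n} \<and> card S = k}. \<forall>i\<in>S. X i w < a"
        then obtain S where S: "S \<subseteq> {1..n}" "card S = k" "\<forall>i\<in>S. X i w < a" by blast
        then have "S \<subseteq> {i\<in>{1..n}. X i w < a}" by blast
        then have "card S \<le> card {i\<in>{1..n}. X i w < a}" by (intro card_mono) auto
        then show "k \<le> card {i\<in>{1..n}. X i w < a}" using S(2) by simp
      qed
      finally show "(ord_stat n X k w < a) = (\<exists>S\<in>{S. S \<subseteq> {1..n} \<and> card S = k}. \<forall>i\<in>S. X i w < a)" .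
    qed
    have fin: "finite {S. S \<subseteq> {1..n} \<and> card S = k}"
      by (rule finite_subset[of _ "Pow {1..n}"]) auto
    have "Measurable.pred M (\<lambda>w. \<exists>S\<in>{S. S \<subseteq> {1..n} \<and> card S = k}. \<forall>i\<in>S. X i w < a)"
    proof (rule pex[OF fin])
      fix S assume "S \<in> {S. S \<subseteq> {1..n} \<and> card S = k}"
      then have S: "S \<subseteq> {1..n}" by simp
      then have fS: "finite S" using finite_subset by blast
      show "Measurable.pred M (\<lambda>w. \<forall>i\<in>S. X i w < a)"
      proof (rule pall[OF fS])
        fix i assume "i \<in> S"
        then have "i \<in> {1..n}" using S by blast
        then show "Measurable.pred M (\<lambda>w. X i w < a)"
          by (intro pred_less rvX borel_measurable_const)
      qed
    qed
    then show "{w \<in> space M. ord_stat n X k w < a} \<in> sets M"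
      unfolding eq pred_def .
  qed

  have AEinj: "AE w in M. inj_on (\<lambda>i. X i w) {1..n}"
  proof -
    have "AE w in M. \<forall>i\<in>{1..n}. \<forall>j\<in>{1..n}. i \<noteq> j \<longrightarrow> X i w \<noteq> X j w"
    proof (intro AE_finite_allI finite_atLeastAtMost)
      fix i j assume i: "i\<in>{1..n}" and j: "j \<in> {1..n}"
      show "AE w in M. i \<noteq> j \<longrightarrow> X i w \<noteq> X j w"
      proof (cases "i = j")
        case True then show ?thesis by simp
      next
        case False
        have sets: "{w\<in>space M. X i w = X j w} \<in> sets M"
          using rvX[OF i] rvX[OF j] by (rule borel_measurable_eq)
        have "emeasure M {w\<in>space M. X i w = X j w} = 0"
          using no_ties[OF i j False] by (simp add: P.emeasure_eq_measure)
        then have "AE w in M. X i w \<noteq> X j w"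
          by (subst AE_iff_measurable[OF sets]) auto
        then show ?thesis by simp
      qed
    qed
    then show ?thesis by eventually_elim (auto simp: inj_on_def)
  qed

  have upred: "Measurable.pred M (\<lambda>w. upset n X B w)" if B: "B \<subseteq> {1..n}" for B
    unfolding upset_def
  proof (rule pall)
    show "finite B" using B finite_subset by blast
  next
    fix i assume "i \<in> B"
    then have i: "i \<in> {1..n}" using B by blast
    show "Measurable.pred M (\<lambda>w. \<forall>j\<in>{1..n} - B. X j w < X i w)"
    proof (rule pall)
      fix j assume "j \<in> {1..n} - B"
      then have "j \<in> {1..n}" by blast
      then show "Measurable.pred M (\<lambda>w. X j w < X i w)" using i by (intro pred_less rvX)
    qed simp
  qed

  have qint: "qprob M n X B = (\<integral>w. of_bool (upset n X B w) \<partial>M)" if B: "B \<subseteq> {1..n}" for B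
  proof -
    have fB: "finite B" using B finite_subset by blast
    have "qprob M n X B = measure M {w\<in>space M. upset n X B w}"
      unfolding qprob_def upset_def
      using maxmin_upset[OF fB, of "{1..n} - B" X] by simp
    then show ?thesis by (simp add: meas_int)
  qed

  have sq: "(\<Sum>B\<in>F. qprob M n X B * c B) = (\<integral>w. (\<Sum>B\<in>F. of_bool (upset n X B w) * c B) \<partial>M)"
    if F: "F \<subseteq> Pow {1..n}" for F and c :: "nat set \<Rightarrow> real"
  proof -
    have fF: "finite F" using F finite_subset by (metis finite_Pow_iff finite_atLeastAtMost)
    have "(\<Sum>B\<in>F. qprob M n X B * c B) = (\<Sum>B\<in>F. (\<integral>w. of_bool (upset n X B w) * c B \<partial>M))"
    proof (rule sum.cong[OF refl])
      fix B assume "B \<in> F"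
      then have "B \<subseteq> {1..n}" using F by blast
      then show "qprob M n X B * c B = (\<integral>w. of_bool (upset n X B w) * c B \<partial>M)"
        by (simp add: qint)
    qed
    also have "\<dots> = (\<integral>w. (\<Sum>B\<in>F. of_bool (upset n X B w) * c B) \<partial>M)"
    proof (rule Bochner_Integration.integral_sum[symmetric])
      fix B assume "B \<in> F"
      then have "B \<subseteq> {1..n}" using F by blast
      then show "integrable M (\<lambda>w. of_bool (upset n X B w) * c B)"
        by (intro integrable_mult_left pred_int[OF pM] upred)
    qed
    finally show ?thesis .
  qed

  have sqint: "integrable M (\<lambda>w. (\<Sum>B\<in>F. of_bool (upset n X B w) * c B))"
    if F: "F \<subseteq> Pow {1..n}" for F and c :: "nat set \<Rightarrow> real"
  proof (rule Bochner_Integration.integrable_sum)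
    fix B assume "B \<in> F"
    then have "B \<subseteq> {1..n}" using F by blast
    then show "integrable M (\<lambda>w. of_bool (upset n X B w) * c B)"
      by (intro integrable_mult_left pred_int[OF pM] upred)
  qed

  have allpred: "Measurable.pred M (\<lambda>w. \<forall>i\<in>A. ord_stat n X k w \<le> X i w)"
     "Measurable.pred M (\<lambda>w. \<forall>i\<in>A. ord_stat n X k w < X i w)"
    if A: "A \<subseteq> {1..n}" and k: "k \<in> {1..n}" for A k
  proof -
    have fA: "finite A" using A finite_subset by blast
    show "Measurable.pred M (\<lambda>w. \<forall>i\<in>A. ord_stat n X k w \<le> X i w)"
    proof (rule pall[OF fA])
      fix i assume "i \<in> A" then have "i \<in> {1..n}" using A by blast
      then show "Measurable.pred M (\<lambda>w. ord_stat n X k w \<le> X i w)"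
        by (intro pred_le rvX osm[OF k])
    qed
    show "Measurable.pred M (\<lambda>w. \<forall>i\<in>A. ord_stat n X k w < X i w)"
    proof (rule pall[OF fA])
      fix i assume "i \<in> A" then have "i \<in> {1..n}" using A by blast
      then show "Measurable.pred M (\<lambda>w. ord_stat n X k w < X i w)"
        by (intro pred_less rvX osm[OF k])
    qed
  qed

  have gen: "(\<Sum>B | A \<subseteq> B \<and> B \<subseteq> {1..n} \<and> card B = m. qprob M n X B) = (\<integral>w. (of_bool (Q w) :: real) \<partial>M)"
    if hyp: "\<And>w. inj_on (\<lambda>i. X i w) {1..n} \<Longrightarrow>
                T w \<subseteq> {1..n} \<and> upset n X (T w) w \<and> card (T w) = m \<and> (A \<subseteq> T w \<longleftrightarrow> Q w)"
      and pQ: "Measurable.pred M Q" for A T Q m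
  proof -
    let ?F = "{B. A \<subseteq> B \<and> B \<subseteq> {1..n} \<and> card B = m}"
    have F: "?F \<subseteq> Pow {1..n}" by auto
    have "(\<Sum>B\<in>?F. qprob M n X B) = (\<Sum>B\<in>?F. qprob M n X B * 1)" by simp
    also have "\<dots> = (\<integral>w. (\<Sum>B\<in>?F. of_bool (upset n X B w) * 1) \<partial>M)" by (rule sq[OF F])
    also have "\<dots> = (\<integral>w. (of_bool (Q w) :: real) \<partial>M)"
    proof (rule integral_cong_AE)
      show "(\<lambda>w. \<Sum>B\<in>?F. of_bool (upset n X B w) * (1::real)) \<in> borel_measurable M"
        using sqint[OF F] by (rule borel_measurable_integrable)
      show "(\<lambda>w. (of_bool (Q w) :: real)) \<in> borel_measurable M" using pQ by (rule pred_borel)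
      show "AE w in M. (\<Sum>B\<in>?F. of_bool (upset n X B w) * (1::real)) = of_bool (Q w)"
        using AEinj
      proof eventually_elim
        case (elim w)
        note T = hyp[OF elim]
        have "(\<Sum>B\<in>?F. of_bool (upset n X B w) * (1::real)) = (\<Sum>B\<in>?F. of_bool (upset n X B w))" by simp
        also have "\<dots> = of_bool (A \<subseteq> T w)" using T by (intro sum_upset1) auto
        finally show ?case using T by simp
      qed
    qed
    finally show ?thesis .
  qed

  have part1: "measure M {w \<in> space M. ereal (ord_stat n X k w) = min_on X A w}
            = (\<Sum>B | A \<subseteq> B \<and> B \<subseteq> {1..n} \<and> card B = n - k + 1. qprob M n X B)
              - (\<Sum>B | A \<subseteq> B \<and> B \<subseteq> {1..n} \<and> card B = n - k. qprob M n X B)"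
    if A: "A \<subseteq> {1..n}" and k: "k \<in> {1..n}" for A k
  proof -
    have fA: "finite A" using A finite_subset by blast
    have iD: "integrable M (\<lambda>w. (of_bool (\<forall>i\<in>A. ord_stat n X k w \<le> X i w) :: real))"
      by (rule pred_int[OF pM allpred(1)[OF A k]])
    have iU: "integrable M (\<lambda>w. (of_bool (\<forall>i\<in>A. ord_stat n X k w < X i w) :: real))"
      by (rule pred_int[OF pM allpred(2)[OF A k]])
    have "measure M {w \<in> space M. ereal (ord_stat n X k w) = min_on X A w}
        = (\<integral>w. (of_bool (ereal (ord_stat n X k w) = min_on X A w) :: real) \<partial>M)"
      by (rule meas_int)
    also have "\<dots> = (\<integral>w. ((of_bool (\<forall>i\<in>A. ord_stat n X k w \<le> X i w) :: real)
                           - of_bool (\<forall>i\<in>A. ord_stat n X k w < X i w)) \<partial>M)"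
      by (rule Bochner_Integration.integral_cong[OF refl]) (rule ind_eq_min[OF fA])
    also have "\<dots> = (\<integral>w. (of_bool (\<forall>i\<in>A. ord_stat n X k w \<le> X i w) :: real) \<partial>M)
                   - (\<integral>w. (of_bool (\<forall>i\<in>A. ord_stat n X k w < X i w) :: real) \<partial>M)"
      by (rule Bochner_Integration.integral_diff[OF iD iU])
    also have "(\<integral>w. (of_bool (\<forall>i\<in>A. ord_stat n X k w \<le> X i w) :: real) \<partial>M)
        = (\<Sum>B | A \<subseteq> B \<and> B \<subseteq> {1..n} \<and> card B = n - k + 1. qprob M n X B)"
    proof (rule gen[symmetric, OF _ allpred(1)[OF A k]])
      fix w
      show "inj_on (\<lambda>i. X i w) {1..n} \<Longrightarrow> {i\<in>{1..n}. ord_stat n X k w \<le> X i w} \<subseteq> {1..n} \<and> upset n X {i\<in>{1..n}. ord_stat n X k w \<le> X i w} w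
           \<and> card {i\<in>{1..n}. ord_stat n X k w \<le> X i w} = n - k + 1
           \<and> (A \<subseteq> {i\<in>{1..n}. ord_stat n X k w \<le> X i w} \<longleftrightarrow> (\<forall>i\<in>A. ord_stat n X k w \<le> X i w))"
      proof -
        assume inj: "inj_on (\<lambda>i. X i w) {1..n}"
        have c: "card {i\<in>{1..n}. ord_stat n X k w \<le> X i w} = n - k + 1" using os_cards(2)[of k n X w] k inj by blast
        have u: "upset n X {i\<in>{1..n}. ord_stat n X k w \<le> X i w} w" by (rule upset_thr(2))
        have e: "(A \<subseteq> {i\<in>{1..n}. ord_stat n X k w \<le> X i w} \<longleftrightarrow> (\<forall>i\<in>A. ord_stat n X k w \<le> X i w))"
          using A by blast
        show ?thesis using c u e by blast
      qed
    qed
    also have "(\<integral>w. (of_bool (\<forall>i\<in>A. ord_stat n X k w < X i w) :: real) \<partial>M)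
        = (\<Sum>B | A \<subseteq> B \<and> B \<subseteq> {1..n} \<and> card B = n - k. qprob M n X B)"
    proof (rule gen[symmetric, OF _ allpred(2)[OF A k]])
      fix w
      show "inj_on (\<lambda>i. X i w) {1..n} \<Longrightarrow> {i\<in>{1..n}. ord_stat n X k w < X i w} \<subseteq> {1..n} \<and> upset n X {i\<in>{1..n}. ord_stat n X k w < X i w} w
           \<and> card {i\<in>{1..n}. ord_stat n X k w < X i w} = n - k
           \<and> (A \<subseteq> {i\<in>{1..n}. ord_stat n X k w < X i w} \<longleftrightarrow> (\<forall>i\<in>A. ord_stat n X k w < X i w))"
      proof -
        assume inj: "inj_on (\<lambda>i. X i w) {1..n}"
        have c: "card {i\<in>{1..n}. ord_stat n X k w < X i w} = n - k" using os_cards(1)[of k n X w] k inj by blast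
        have u: "upset n X {i\<in>{1..n}. ord_stat n X k w < X i w} w" by (rule upset_thr(1))
        have e: "(A \<subseteq> {i\<in>{1..n}. ord_stat n X k w < X i w} \<longleftrightarrow> (\<forall>i\<in>A. ord_stat n X k w < X i w))"
          using A by blast
        show ?thesis using c u e by blast
      qed
    qed
    finally show ?thesis .
  qed

  have part2: "measure M {w \<in> space M. sys_lifetime n \<phi> X w > ord_stat n X k w}
              = (\<Sum>A | A \<subseteq> {1..n} \<and> card A = n - k. qprob M n X A * of_bool (\<phi> A))
          \<and> (\<Sum>A | A \<subseteq> {1..n} \<and> card A = n - k. qprob M n X A * of_bool (\<phi> A))
              = (\<Sum>A\<in>Pow {1..n}. mobius \<phi> A *
                   measure M {w \<in> space M. ereal (ord_stat n X k w) < min_on X A w})"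
    if k: "k \<in> {1..n}" for k
  proof -
    define U where "U w = {i\<in>{1..n}. ord_stat n X k w < X i w}" for w
    have eq: "\<phi> (U w) \<longleftrightarrow> (\<exists>S\<in>Pow {1..n}. \<phi> S \<and> (\<forall>i\<in>{1..n}. (i \<in> S) = (ord_stat n X k w < X i w)))" for w
    proof
      assume "\<phi> (U w)"
      then show "\<exists>S\<in>Pow {1..n}. \<phi> S \<and> (\<forall>i\<in>{1..n}. (i \<in> S) = (ord_stat n X k w < X i w))"
        by (intro bexI[of _ "U w"]) (auto simp: U_def)
    next
      assume "\<exists>S\<in>Pow {1..n}. \<phi> S \<and> (\<forall>i\<in>{1..n}. (i \<in> S) = (ord_stat n X k w < X i w))"
      then obtain S where S: "S \<in> Pow {1..n}" "\<phi> S" "\<forall>i\<in>{1..n}. (i \<in> S) = (ord_stat n X k w < X i w)"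
        by blast
      then have "S = U w" unfolding U_def by auto
      then show "\<phi> (U w)" using S(2) by simp
    qed
    have pphi: "Measurable.pred M (\<lambda>w. \<phi> (U w))"
    proof -
      have "Measurable.pred M (\<lambda>w. \<exists>S\<in>Pow {1..n}. \<phi> S \<and> (\<forall>i\<in>{1..n}. (i \<in> S) = (ord_stat n X k w < X i w)))"
      proof (rule pex)
        fix S
        have "Measurable.pred M (\<lambda>w. \<forall>i\<in>{1..n}. (i \<in> S) = (ord_stat n X k w < X i w))"
        proof (rule pall)
          fix i assume i: "i \<in> {1..n}"
          have "Measurable.pred M (\<lambda>w. ord_stat n X k w < X i w)"
            by (rule pred_less[OF osm[OF k] rvX[OF i]])
          then show "Measurable.pred M (\<lambda>w. (i \<in> S) = (ord_stat n X k w < X i w))"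
            by (rule pred_intros_logic(6)[OF pred_constb])
        qed simp
        then show "Measurable.pred M (\<lambda>w. \<phi> S \<and> (\<forall>i\<in>{1..n}. (i \<in> S) = (ord_stat n X k w < X i w)))"
          by (rule pred_intros_logic(3)[OF pred_constb])
      qed simp
      then show ?thesis unfolding eq .
    qed
    have meas: "measure M {w \<in> space M. sys_lifetime n \<phi> X w > ord_stat n X k w}
        = (\<integral>w. (of_bool (\<phi> (U w)) :: real) \<partial>M)"
    proof -
      have h: "{w \<in> space M. sys_lifetime n \<phi> X w > ord_stat n X k w} = {w\<in>space M. \<phi> (U w)}"
      proof (intro Collect_cong conj_cong refl)
        fix w assume w: "w \<in> space M"
        obtain i where i: "i\<in>{1..n}" "ord_stat n X k w = X i w" using os_mem[OF k, of X w] by blast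
        have v0: "0 \<le> ord_stat n X k w" using nonneg[OF i(1) w] i(2) by simp
        have nn: "\<forall>i\<in>{1..n}. 0 \<le> X i w" using nonneg w by blast
        show "(ord_stat n X k w < sys_lifetime n \<phi> X w) = \<phi> (U w)"
          unfolding U_def by (rule sys_char[where X=X and w=w, OF semi nn v0])
      qed
      show ?thesis unfolding h by (rule meas_int)
    qed
    let ?F = "{A. A \<subseteq> {1..n} \<and> card A = n - k}"
    have F: "?F \<subseteq> Pow {1..n}" by auto
    have S: "(\<Sum>A | A \<subseteq> {1..n} \<and> card A = n - k. qprob M n X A * of_bool (\<phi> A))
        = (\<integral>w. (of_bool (\<phi> (U w)) :: real) \<partial>M)"
    proof -
      have "(\<Sum>A\<in>?F. qprob M n X A * of_bool (\<phi> A))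
          = (\<integral>w. (\<Sum>A\<in>?F. of_bool (upset n X A w) * of_bool (\<phi> A)) \<partial>M)"
        by (rule sq[OF F])
      also have "\<dots> = (\<integral>w. (of_bool (\<phi> (U w)) :: real) \<partial>M)"
      proof (rule integral_cong_AE)
        show "(\<lambda>w. \<Sum>A\<in>?F. of_bool (upset n X A w) * (of_bool (\<phi> A) :: real)) \<in> borel_measurable M"
          using sqint[OF F] by (rule borel_measurable_integrable)
        show "(\<lambda>w. (of_bool (\<phi> (U w)) :: real)) \<in> borel_measurable M" using pphi by (rule pred_borel)
        show "AE w in M. (\<Sum>A\<in>?F. of_bool (upset n X A w) * (of_bool (\<phi> A) :: real)) = of_bool (\<phi> (U w))"
          using AEinj
        proof eventually_elim
          case (elim w)
          have c: "card (U w) = n - k" unfolding U_def using os_cards(1)[of k n X w] k elim by blast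
          have u: "upset n X (U w) w" unfolding U_def by (rule upset_thr(1))
          have sb: "U w \<subseteq> {1..n}" unfolding U_def by blast
          show ?case by (rule sum_upset2[OF sb u c])
        qed
      qed
      finally show ?thesis .
    qed
    have Mb: "(\<Sum>A\<in>Pow {1..n}. mobius \<phi> A *
                   measure M {w \<in> space M. ereal (ord_stat n X k w) < min_on X A w})
        = (\<integral>w. (of_bool (\<phi> (U w)) :: real) \<partial>M)"
    proof -
      have "(\<Sum>A\<in>Pow {1..n}. mobius \<phi> A *
                   measure M {w \<in> space M. ereal (ord_stat n X k w) < min_on X A w})
          = (\<Sum>A\<in>Pow {1..n}. (\<integral>w. mobius \<phi> A * of_bool (\<forall>i\<in>A. ord_stat n X k w < X i w) \<partial>M))"
      proof (rule sum.cong[OF refl])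
        fix A assume "A \<in> Pow {1..n}"
        then have fA: "finite A" using finite_subset by auto
        have "measure M {w \<in> space M. ereal (ord_stat n X k w) < min_on X A w}
            = (\<integral>w. (of_bool (\<forall>i\<in>A. ord_stat n X k w < X i w) :: real) \<partial>M)"
          by (simp add: meas_int less_min_on[OF fA])
        then show "mobius \<phi> A * measure M {w \<in> space M. ereal (ord_stat n X k w) < min_on X A w}
            = (\<integral>w. mobius \<phi> A * of_bool (\<forall>i\<in>A. ord_stat n X k w < X i w) \<partial>M)"
          by simp
      qed
      also have "\<dots> = (\<integral>w. (\<Sum>A\<in>Pow {1..n}. mobius \<phi> A * of_bool (\<forall>i\<in>A. ord_stat n X k w < X i w)) \<partial>M)"
      proof (rule Bochner_Integration.integral_sum[symmetric])
        fix A assume "A \<in> Pow {1..n}"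
        then have "A \<subseteq> {1..n}" by simp
        then show "integrable M (\<lambda>w. mobius \<phi> A * of_bool (\<forall>i\<in>A. ord_stat n X k w < X i w))"
          by (intro integrable_mult_right pred_int[OF pM] allpred(2)[OF _ k])
      qed
      also have "\<dots> = (\<integral>w. (of_bool (\<phi> (U w)) :: real) \<partial>M)"
      proof (rule Bochner_Integration.integral_cong[OF refl])
        fix w
        have "(\<Sum>A\<in>Pow {1..n}. mobius \<phi> A * of_bool (\<forall>i\<in>A. ord_stat n X k w < X i w))
            = (\<Sum>A\<in>Pow {1..n}. if A \<subseteq> U w then mobius \<phi> A else 0)"
          by (rule sum.cong[OF refl]) (auto simp: U_def)
        also have "\<dots> = (\<Sum>A\<in>{A\<in>Pow {1..n}. A \<subseteq> U w}. mobius \<phi> A)"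
          by (rule sum.inter_filter[symmetric]) simp
        also have "{A\<in>Pow {1..n}. A \<subseteq> U w} = Pow (U w)" by (auto simp: U_def)
        also have "(\<Sum>A\<in>Pow (U w). mobius \<phi> A) = of_bool (\<phi> (U w))"
          by (rule mobius_inv) (simp add: U_def)
        finally show "(\<Sum>A\<in>Pow {1..n}. mobius \<phi> A * of_bool (\<forall>i\<in>A. ord_stat n X k w < X i w))
            = (of_bool (\<phi> (U w)) :: real)" .
      qed
      finally show ?thesis .
    qed
    show ?thesis using meas S Mb by simp
  qed
  show ?thesis using part1 part2 by blast
qed

end
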